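(* Assume the Continuum Hypothesis. Let $X$ be a weakly Lindelöf determined (WLD) real Banach space with $\operatorname{dens} X = \omega_1$. Then $X$ contains an overcomplete subset.
   Context: A Banach space $X$ is WLD if there exist a set $\Gamma$ and a bounded linear one-to-one operator $T\colon X^* \to \ell_\infty^c(\Gamma)$ that is weak$^*$-to-pointwise continuous, where $\ell_\infty^c(\Gamma)$ is the space of bounded real functions on $\Gamma$ with countable support. $\operatorname{dens}$ denotes the density character. A subset $S$ of a Banach space $X$ with $|S| = \operatorname{dens} X$ is called overcomplete if every subset $\Lambda \subseteq S$ with $|\Lambda| = |S|$ is linearly dense in $X$. *)

theory Defs
  imports "HOL-Analysis.Analysis"
begin

unbundle cardinal_syntax

definition CH :: bool where
  "CH \<longleftrightarrow> (card_of (UNIV :: real set)) =o cardSuc natLeq"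

definition dens_is :: "'a::real_normed_vector itself \<Rightarrow> 'b rel \<Rightarrow> bool" where
  "dens_is _ r \<longleftrightarrow>
     (\<exists>D :: 'a set. closure D = UNIV \<and> (card_of (D)) =o r) \<and>
     (\<forall>D :: 'a set. closure D = UNIV \<longrightarrow> r \<le>o (card_of (D)))"

definition weak_star_topology :: "('a::real_normed_vector \<Rightarrow>\<^sub>L real) topology" where
  "weak_star_topology = pullback_topology UNIV blinfun_apply (powertop_real UNIV)"

definition ell_inf_c :: "('g \<Rightarrow> real) set" where
  "ell_inf_c = {f. bounded (range f) \<and> countable {\<gamma>. f \<gamma> \<noteq> 0}}"

text \<open>WLD: there exist Gamma and a bounded linear injective operator
  T : X^* \<rightarrow> ell_infinity^c(Gamma) that is weak-star-to-pointwise continuous.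
  Gamma is the universe of the type 'g.\<close>
definition WLD_via :: "'a::banach itself \<Rightarrow> 'g itself \<Rightarrow> bool" where
  "WLD_via _ _ \<longleftrightarrow>
    (\<exists>T :: ('a \<Rightarrow>\<^sub>L real) \<Rightarrow> ('g \<Rightarrow> real).
        (\<forall>\<phi>. T \<phi> \<in> ell_inf_c)
      \<and> (\<forall>\<phi> \<psi> \<gamma>. T (\<phi> + \<psi>) \<gamma> = T \<phi> \<gamma> + T \<psi> \<gamma>)
      \<and> (\<forall>c \<phi> \<gamma>. T (c *\<^sub>R \<phi>) \<gamma> = c * T \<phi> \<gamma>)
      \<and> (\<exists>C. \<forall>\<phi>. (SUP \<gamma>. \<bar>T \<phi> \<gamma>\<bar>) \<le> C * norm \<phi>)
      \<and> inj T
      \<and> continuous_map weak_star_topology (powertop_real UNIV) T)"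

definition overcomplete :: "'a::real_normed_vector set \<Rightarrow> bool" where
  "overcomplete S \<longleftrightarrow> dens_is TYPE('a) (card_of (S)) \<and>
     (\<forall>\<Lambda>\<subseteq>S. (card_of (\<Lambda>)) =o (card_of (S)) \<longrightarrow> closure (span \<Lambda>) = UNIV)"

end

theory Submission
  imports Defs "HOL-Library.Countable_Set_Type"
begin

definition good_graph :: "('a::real_vector \<Rightarrow> real) \<Rightarrow> ('a \<times> real) set \<Rightarrow> bool" where
  "good_graph p G \<longleftrightarrow> (\<forall>x a b. (x,a)\<in>G \<longrightarrow> (x,b)\<in>G \<longrightarrow> a=b)
     \<and> (\<forall>x a y b. (x,a)\<in>G \<longrightarrow> (y,b)\<in>G \<longrightarrow> (x+y,a+b)\<in>G)
     \<and> (\<forall>x a c. (x,a)\<in>G \<longrightarrow> (c *\<^sub>R x, c*a)\<in>G)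
     \<and> (\<forall>x a. (x,a)\<in>G \<longrightarrow> a \<le> p x)"

lemma good_graph_extend:
  fixes p :: "'a::real_vector \<Rightarrow> real"
  assumes sub: "\<And>x y. p (x+y) \<le> p x + p y"
    and hom: "\<And>t x. t > 0 \<Longrightarrow> p (t *\<^sub>R x) = t * p x"
    and gg: "good_graph p M" and ne: "M \<noteq> {}"
    and z: "\<And>a. (z,a) \<notin> M"
  shows "\<exists>M'. good_graph p M' \<and> M \<subseteq> M' \<and> M' \<noteq> M"
proof -
  have fnc: "\<And>x a b. (x,a)\<in>M \<Longrightarrow> (x,b)\<in>M \<Longrightarrow> a=b"
    and add: "\<And>x a y b. (x,a)\<in>M \<Longrightarrow> (y,b)\<in>M \<Longrightarrow> (x+y,a+b)\<in>M"
    and scl: "\<And>x a c. (x,a)\<in>M \<Longrightarrow> (c *\<^sub>R x, c*a)\<in>M"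
    and dom: "\<And>x a. (x,a)\<in>M \<Longrightarrow> a \<le> p x"
    using gg unfolding good_graph_def by blast+
  obtain x0 a0 where "(x0,a0) \<in> M" using ne by auto
  from scl[OF this, of 0] have zero: "(0,0) \<in> M" by simp
  define S1 where "S1 = {u. \<exists>y a. u = a - p (y - z) \<and> (y,a) \<in> M}"
  define c where "c = Sup S1"
  have key: "a - p (y - z) \<le> p (x + z) - b" if "(y,a)\<in>M" "(x,b)\<in>M" for x y a b
  proof -
    have "a + b \<le> p (x + y)" using dom[OF add[OF that(2) that(1)]] by simp
    also have "x + y = (x + z) + (y - z)" by simp
    also have "p \<dots> \<le> p (x + z) + p (y - z)" by (rule sub)
    finally show ?thesis by simp
  qed
  have S1ne: "S1 \<noteq> {}" using zero unfolding S1_def by blast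
  have S1bdd: "bdd_above S1" unfolding S1_def bdd_above_def
    using key[OF _ zero] by blast
  have c1: "a - p (y - z) \<le> c" if "(y,a)\<in>M" for y a
    unfolding c_def using S1bdd that by (auto intro!: cSup_upper simp: S1_def)
  have c2: "c \<le> p (x + z) - b" if "(x,b)\<in>M" for x b
    unfolding c_def using S1ne that key by (auto intro!: cSup_least simp: S1_def)
  define M' where "M' = {u. \<exists>x a t. u = (x + t *\<^sub>R z, a + t* c) \<and> (x,a)\<in>M}"
  have neg: "(x - y, a - b) \<in> M" if "(x,a)\<in>M" "(y,b)\<in>M" for x y a b
    using add[OF that(1) scl[OF that(2), of "-1"]] by simp
  have "good_graph p M'"
    unfolding good_graph_def
  proof (intro conjI allI impI)
    fix w a b assume wa: "(w,a) \<in> M'" and wb: "(w,b) \<in> M'"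
    then obtain x a1 t y b1 s where xa: "(x,a1)\<in>M" "w = x + t *\<^sub>R z" "a = a1 + t* c"
      and yb: "(y,b1)\<in>M" "w = y + s *\<^sub>R z" "b = b1 + s* c"
      unfolding M'_def by blast
    have d: "(x - y, a1 - b1) \<in> M" using neg xa(1) yb(1) by blast
    have ts: "t = s"
    proof (rule ccontr)
      assume "t \<noteq> s"
      have "x - y = (s - t) *\<^sub>R z" using xa(2) yb(2) by (simp add: algebra_simps)
      hence "z = (1/(s-t)) *\<^sub>R (x - y)" using \<open>t \<noteq> s\<close> by simp
      thus False using scl[OF d, of "1/(s-t)"] z by metis
    qed
    hence "x = y" using xa(2) yb(2) by simp
    hence "a1 = b1" using fnc xa(1) yb(1) by blast
    thus "a = b" using xa(3) yb(3) ts by simp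
  next
    fix w a v b assume "(w,a) \<in> M'" "(v,b) \<in> M'"
    then obtain x a1 t y b1 s where xa: "(x,a1)\<in>M" "w = x + t *\<^sub>R z" "a = a1 + t* c"
      and yb: "(y,b1)\<in>M" "v = y + s *\<^sub>R z" "b = b1 + s* c"
      unfolding M'_def by blast
    have "(x+y, a1+b1) \<in> M" using add xa(1) yb(1) by blast
    moreover have "w + v = (x+y) + (t+s) *\<^sub>R z" "a + b = (a1+b1) + (t+s)* c"
      using xa yb by (auto simp: algebra_simps)
    ultimately show "(w+v, a+b) \<in> M'" unfolding M'_def by blast
  next
    fix w a r assume "(w,a) \<in> M'"
    then obtain x a1 t where xa: "(x,a1)\<in>M" "w = x + t *\<^sub>R z" "a = a1 + t* c"
      unfolding M'_def by blast
    have "(r *\<^sub>R x, r*a1) \<in> M" using scl xa(1) by blast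
    moreover have "r *\<^sub>R w = r *\<^sub>R x + (r*t) *\<^sub>R z" "r * a = r*a1 + (r*t)* c"
      using xa by (auto simp: algebra_simps)
    ultimately show "(r *\<^sub>R w, r*a) \<in> M'" unfolding M'_def by blast
  next
    fix w a assume "(w,a) \<in> M'"
    then obtain x a1 t where xa: "(x,a1)\<in>M" "w = x + t *\<^sub>R z" "a = a1 + t* c"
      unfolding M'_def by blast
    consider "t = 0" | "t > 0" | "t < 0" by linarith
    then show "a \<le> p w"
    proof cases
      case 1 thus ?thesis using xa dom by simp
    next
      case 2
      have "(inverse t *\<^sub>R x, inverse t * a1) \<in> M" using scl xa(1) by blast
      from c2[OF this] have "t * c \<le> t * (p (inverse t *\<^sub>R x + z) - inverse t * a1)"
        using 2 by (simp add: mult_left_mono)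
      moreover have e: "t *\<^sub>R (inverse t *\<^sub>R x + z) = w" using 2 xa(2) by (simp add: algebra_simps)
      moreover have "t * p (inverse t *\<^sub>R x + z) = p w" using hom[OF 2, of "inverse t *\<^sub>R x + z"] e by simp
      moreover have "t * (inverse t * a1) = a1" using 2 by simp
      ultimately show ?thesis using xa(3) by (simp add: right_diff_distrib)
    next
      case 3
      define s where "s = - t"
      have s: "s > 0" using 3 s_def by simp
      have "(inverse s *\<^sub>R x, inverse s * a1) \<in> M" using scl xa(1) by blast
      from c1[OF this] have "s * (inverse s * a1 - p (inverse s *\<^sub>R x - z)) \<le> s * c"
        using s by (simp add: mult_left_mono)
      hence "a1 - s * p (inverse s *\<^sub>R x - z) \<le> s * c" using s by (simp add: algebra_simps)
      moreover have "s * p (inverse s *\<^sub>R x - z) = p (s *\<^sub>R (inverse s *\<^sub>R x - z))"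
        using hom[OF s] by simp
      moreover have "s *\<^sub>R (inverse s *\<^sub>R x - z) = w" using s xa(2) s_def by (simp add: algebra_simps)
      ultimately show ?thesis using xa(3) s_def by simp
    qed
  qed
  moreover have "M \<subseteq> M'" unfolding M'_def by force
  moreover have "(z, c) \<in> M'" unfolding M'_def using zero by force
  ultimately show ?thesis using z by blast
qed

lemma hahn_banach_graph:
  fixes p :: "'a::real_vector \<Rightarrow> real"
  assumes sub: "\<And>x y. p (x+y) \<le> p x + p y"
    and hom: "\<And>t x. t > 0 \<Longrightarrow> p (t *\<^sub>R x) = t * p x"
    and gg: "good_graph p G0" and ne: "G0 \<noteq> {}"
  shows "\<exists>F. linear F \<and> (\<forall>x. F x \<le> p x) \<and> (\<forall>x a. (x,a)\<in>G0 \<longrightarrow> F x = a)"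
proof -
  define A where "A = {G. G0 \<subseteq> G \<and> good_graph p G}"
  have "\<exists>M\<in>A. \<forall>X\<in>A. M \<subseteq> X \<longrightarrow> X = M"
  proof (rule Zorn_Lemma2, intro ballI)
    fix C assume C: "C \<in> chains A"
    show "\<exists>U\<in>A. \<forall>X\<in>C. X \<subseteq> U"
    proof (cases "C = {}")
      case True thus ?thesis using gg unfolding A_def by auto
    next
      case False
      have CA: "C \<subseteq> A" and ch: "\<And>X Y. X\<in>C \<Longrightarrow> Y\<in>C \<Longrightarrow> X \<subseteq> Y \<or> Y \<subseteq> X"
        using C unfolding chains_def chain_subset_def by auto
      have two: "\<exists>G\<in>C. u \<in> G \<and> v \<in> G" if "u \<in> \<Union>C" "v \<in> \<Union>C" for u v
        using that ch by blast
      have "good_graph p (\<Union>C)"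
        unfolding good_graph_def
      proof (intro conjI allI impI)
        fix x a b assume "(x,a) \<in> \<Union>C" "(x,b) \<in> \<Union>C"
        then obtain G where "G \<in> C" "(x,a)\<in>G" "(x,b)\<in>G" using two by blast
        thus "a = b" using CA unfolding A_def good_graph_def by blast
      next
        fix x a y b assume "(x,a) \<in> \<Union>C" "(y,b) \<in> \<Union>C"
        then obtain G where "G \<in> C" "(x,a)\<in>G" "(y,b)\<in>G" using two by blast
        thus "(x+y,a+b) \<in> \<Union>C" using CA unfolding A_def good_graph_def by blast
      next
        fix x a c assume "(x,a) \<in> \<Union>C"
        then obtain G where "G \<in> C" "(x,a)\<in>G" by blast
        thus "(c *\<^sub>R x, c*a) \<in> \<Union>C" using CA unfolding A_def good_graph_def by blast
      next
        fix x a assume "(x,a) \<in> \<Union>C"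
        then obtain G where "G \<in> C" "(x,a)\<in>G" by blast
        thus "a \<le> p x" using CA unfolding A_def good_graph_def by blast
      qed
      moreover have "G0 \<subseteq> \<Union>C" using False CA unfolding A_def by auto
      ultimately show ?thesis unfolding A_def by blast
    qed
  qed
  then obtain M where MA: "M \<in> A" and max: "\<And>X. X \<in> A \<Longrightarrow> M \<subseteq> X \<Longrightarrow> X = M" by blast
  have ggM: "good_graph p M" and G0M: "G0 \<subseteq> M" using MA unfolding A_def by auto
  have Mne: "M \<noteq> {}" using G0M ne by auto
  have tot: "\<exists>a. (z,a) \<in> M" for z
  proof (rule ccontr)
    assume "\<not> ?thesis"
    then obtain M' where "good_graph p M'" "M \<subseteq> M'" "M' \<noteq> M"
      using good_graph_extend[OF sub hom ggM Mne] by blast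
    thus False using max[of M'] G0M unfolding A_def by blast
  qed
  have fnc: "\<And>x a b. (x,a)\<in>M \<Longrightarrow> (x,b)\<in>M \<Longrightarrow> a=b"
    and add: "\<And>x a y b. (x,a)\<in>M \<Longrightarrow> (y,b)\<in>M \<Longrightarrow> (x+y,a+b)\<in>M"
    and scl: "\<And>x a c. (x,a)\<in>M \<Longrightarrow> (c *\<^sub>R x, c*a)\<in>M"
    and dom: "\<And>x a. (x,a)\<in>M \<Longrightarrow> a \<le> p x"
    using ggM unfolding good_graph_def by blast+
  define F where "F x = (THE a. (x,a) \<in> M)" for x
  have FM: "(x, F x) \<in> M" for x
    unfolding F_def using tot[of x] fnc by (metis theI)
  have Feq: "(x,a) \<in> M \<Longrightarrow> F x = a" for x a using FM fnc by blast
  have "linear F"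
  proof (rule linearI)
    fix x y show "F (x + y) = F x + F y" using Feq[OF add[OF FM FM]] .
  next
    fix c x show "F (c *\<^sub>R x) = c *\<^sub>R F x" using Feq[OF scl[OF FM]] by simp
  qed
  moreover have "\<forall>x. F x \<le> p x" using dom FM by blast
  moreover have "\<forall>x a. (x,a)\<in>G0 \<longrightarrow> F x = a" using Feq G0M by blast
  ultimately show ?thesis by blast
qed

lemma subspace_closure_real:
  fixes Y :: "'a::real_normed_vector set"
  assumes "subspace Y"
  shows "subspace (closure Y)"
  unfolding subspace_def
proof (intro conjI ballI allI)
  show "0 \<in> closure Y" using assms closure_subset subspace_0 by blast
next
  fix x y assume "x \<in> closure Y" "y \<in> closure Y"
  then obtain u v where "\<forall>n. u n \<in> Y" "u \<longlonglongrightarrow> x" "\<forall>n. v n \<in> Y" "v \<longlonglongrightarrow> y"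
    by (meson closure_sequential)
  moreover have "(\<lambda>n. u n + v n) \<longlonglongrightarrow> x + y" using calculation by (intro tendsto_add) auto
  ultimately show "x + y \<in> closure Y" unfolding closure_sequential
    using assms subspace_add by (intro exI[of _ "\<lambda>n. u n + v n"]) blast
next
  fix c and x assume "x \<in> closure Y"
  then obtain u where "\<forall>n. u n \<in> Y" "u \<longlonglongrightarrow> x"
    by (meson closure_sequential)
  moreover have "(\<lambda>n. c *\<^sub>R u n) \<longlonglongrightarrow> c *\<^sub>R x" using calculation by (intro tendsto_scaleR) auto
  ultimately show "c *\<^sub>R x \<in> closure Y" unfolding closure_sequential
    using assms subspace_scale by (intro exI[of _ "\<lambda>n. c *\<^sub>R u n"]) blast
qed

lemma separate_subspace:
  fixes Y :: "'a::real_normed_vector set"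
  assumes Y: "subspace Y" "closed Y" and z: "z \<notin> Y"
  shows "\<exists>f::'a \<Rightarrow>\<^sub>L real. (\<forall>y\<in>Y. f y = 0) \<and> f z = 1"
proof -
  have Yne: "Y \<noteq> {}" using Y subspace_0 by blast
  define d where "d = infdist z Y"
  have d: "d > 0" using in_closed_iff_infdist_zero[OF Y(2) Yne] z infdist_nonneg[of z Y]
    unfolding d_def by force
  define p where "p x = norm x / d" for x :: 'a
  define G0 where "G0 = {u. \<exists>y t. u = (y + t *\<^sub>R z, t) \<and> y \<in> Y}"
  have gg: "good_graph p G0"
    unfolding good_graph_def
  proof (intro conjI allI impI)
    fix w a b assume "(w,a) \<in> G0" "(w,b) \<in> G0"
    then obtain y y' where yy: "y \<in> Y" "y' \<in> Y" "y + a *\<^sub>R z = y' + b *\<^sub>R z"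
      unfolding G0_def by blast
    show "a = b"
    proof (rule ccontr)
      assume "a \<noteq> b"
      have "(a - b) *\<^sub>R z = y' - y" using yy(3) by (simp add: algebra_simps)
      hence "(1/(a-b)) *\<^sub>R ((a - b) *\<^sub>R z) = (1/(a-b)) *\<^sub>R (y' - y)" by simp
      hence "z = (1/(a-b)) *\<^sub>R (y' - y)" using \<open>a \<noteq> b\<close> by simp
      moreover have "(1/(a-b)) *\<^sub>R (y' - y) \<in> Y" using yy Y(1) by (simp add: subspace_diff subspace_scale)
      ultimately show False using z by simp
    qed
  next
    fix w a v b assume "(w,a) \<in> G0" "(v,b) \<in> G0"
    then obtain y y' where "y \<in> Y" "y' \<in> Y" "w = y + a *\<^sub>R z" "v = y' + b *\<^sub>R z"
      unfolding G0_def by blast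
    moreover have "w + v = (y + y') + (a + b) *\<^sub>R z" using calculation by (simp add: algebra_simps)
    ultimately show "(w + v, a + b) \<in> G0" unfolding G0_def using Y(1) subspace_add by blast
  next
    fix w a c assume "(w,a) \<in> G0"
    then obtain y where "y \<in> Y" "w = y + a *\<^sub>R z" unfolding G0_def by blast
    moreover have "c *\<^sub>R w = c *\<^sub>R y + (c * a) *\<^sub>R z" using calculation by (simp add: algebra_simps)
    ultimately show "(c *\<^sub>R w, c * a) \<in> G0" unfolding G0_def using Y(1) subspace_scale by blast
  next
    fix w a assume "(w,a) \<in> G0"
    then obtain y where y: "y \<in> Y" "w = y + a *\<^sub>R z" unfolding G0_def by blast
    show "a \<le> p w"
    proof (cases "a > 0")
      case False
      have "0 \<le> norm w / d" using d by simp
      thus ?thesis using False unfolding p_def by linarith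
    next
      case True
      have "- ((1/a) *\<^sub>R y) \<in> Y" using y Y(1) by (simp add: subspace_neg subspace_scale)
      from infdist_le[OF this, of z] have "d \<le> norm (z + (1/a) *\<^sub>R y)"
        unfolding d_def by (simp add: dist_norm)
      hence "a * d \<le> a * norm (z + (1/a) *\<^sub>R y)" using True by simp
      also have "\<dots> = norm (a *\<^sub>R (z + (1/a) *\<^sub>R y))" using True by simp
      also have "a *\<^sub>R (z + (1/a) *\<^sub>R y) = w" using True y by (simp add: algebra_simps)
      finally show ?thesis unfolding p_def using d by (simp add: pos_le_divide_eq)
    qed
  qed
  have sub: "p (x + y) \<le> p x + p y" for x y
    unfolding p_def using d norm_triangle_ineq[of x y] by (simp add: divide_right_mono flip: add_divide_distrib)
  have hom: "p (t *\<^sub>R x) = t * p x" if "t > 0" for t x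
    unfolding p_def using that by simp
  have "(0 + 1 *\<^sub>R z, 1) \<in> G0" unfolding G0_def using Y(1) subspace_0 by blast
  hence ne: "G0 \<noteq> {}" by blast
  obtain F where F: "linear F" "\<And>x. F x \<le> p x" "\<And>x a. (x,a)\<in>G0 \<Longrightarrow> F x = a"
    using hahn_banach_graph[OF sub hom gg ne] by blast
  have "\<bar>F x\<bar> \<le> norm x * (1/d)" for x
  proof -
    have "F x \<le> norm x / d" using F(2) unfolding p_def .
    moreover have "- F x \<le> norm x / d" using F(2)[of "-x"] linear_neg[OF F(1)] unfolding p_def by simp
    ultimately show ?thesis by simp
  qed
  hence bl: "bounded_linear F"
  proof (intro bounded_linear_intro)
    fix x y show "F (x + y) = F x + F y" using F(1) by (rule linear_add)
  next
    fix r x show "F (r *\<^sub>R x) = r *\<^sub>R F x" using F(1) by (rule linear_scale)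
  next
    fix x assume "\<And>x. \<bar>F x\<bar> \<le> norm x * (1/d)"
    thus "norm (F x) \<le> norm x * (1/d)" by simp
  qed
  have G0I: "(y + t *\<^sub>R z, t) \<in> G0" if "y \<in> Y" for y t unfolding G0_def using that by auto
  have Fy: "F y = 0" if "y \<in> Y" for y using F(3)[OF G0I[OF that, of 0]] by simp
  have Fz: "F z = 1" using F(3)[OF G0I[OF subspace_0[OF Y(1)], of 1]] by simp
  have fF: "blinfun_apply (Blinfun F) = F" by (rule bounded_linear_Blinfun_apply[OF bl])
  show ?thesis
    apply (rule exI[of _ "Blinfun F"])
    apply (unfold fF)
    using Fy Fz by blast
qed

lemma avoid_kernels:
  fixes C :: "('a::banach \<Rightarrow>\<^sub>L real) set"
  assumes "countable C" "\<And>g. g \<in> C \<Longrightarrow> g \<noteq> 0"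
  shows "\<exists>x. \<forall>g\<in>C. g x \<noteq> 0"
proof -
  define G where "G = (\<lambda>g. {x. blinfun_apply g x = 0}) ` C"
  have "euclidean interior_of \<Union>G = {}"
  proof (rule Baire_category_alt)
    show "completely_metrizable_space (euclidean::'a topology) \<or> locally_compact_space (euclidean::'a topology) \<and> regular_space (euclidean::'a topology)"
      using completely_metrizable_space_euclidean by blast
    show "countable G" using assms(1) unfolding G_def by blast
    fix T assume "T \<in> G"
    then obtain g where g: "g \<in> C" "T = {x. g x = 0}" unfolding G_def by blast
    have "closed T" unfolding g(2)
      by (intro closed_Collect_eq continuous_intros)
    moreover have "interior T = {}"
    proof (rule ccontr)
      assume "interior T \<noteq> {}"
      then obtain x where "x \<in> interior T" by blast
      then obtain r where r: "r > 0" "ball x r \<subseteq> T" by (meson mem_interior)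
      obtain v where v: "g v \<noteq> 0" using assms(2)[OF g(1)] by (metis blinfun_eqI zero_blinfun.rep_eq)
      have vn: "norm v > 0" using v by (metis blinfun.zero_right zero_less_norm_iff)
      define w where "w = x + (r / (2 * norm v)) *\<^sub>R v"
      have "dist x w < r" unfolding w_def dist_norm using r vn by simp
      hence "w \<in> T" using r by auto
      moreover have "x \<in> T" using r by (simp add: subset_iff)
      ultimately have "g ((r / (2 * norm v)) *\<^sub>R v) = 0" using g(2) unfolding w_def
        by (simp add: blinfun.add_right)
      thus False using v r vn by (simp add: blinfun.scaleR_right)
    qed
    ultimately show "closedin euclidean T \<and> euclidean interior_of T = {}" by simp
  qed
  hence "\<Union>G \<noteq> UNIV" by auto
  then obtain x where "x \<notin> \<Union>G" by blast
  thus ?thesis unfolding G_def by blast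
qed

lemma fin_eval:
  fixes L :: "('a::real_normed_vector \<Rightarrow>\<^sub>L real) \<Rightarrow> real"
  assumes "finite F"
    and "\<And>(\<phi>::'a \<Rightarrow>\<^sub>L real) \<psi>. L (\<phi> + \<psi>) = L \<phi> + L \<psi>"
    and "\<And>c (\<phi>::'a \<Rightarrow>\<^sub>L real). L (c *\<^sub>R \<phi>) = c * L \<phi>"
    and "\<And>\<phi>::'a \<Rightarrow>\<^sub>L real. (\<forall>x\<in>F. blinfun_apply \<phi> x = 0) \<Longrightarrow> L \<phi> = 0"
  shows "\<exists>x. \<forall>\<phi>::'a \<Rightarrow>\<^sub>L real. L \<phi> = \<phi> x"
  using assms
proof (induction F arbitrary: L rule: finite_induct)
  case empty
  thus ?case by (intro exI[of _ 0]) auto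
next
  case (insert a F)
  show ?case
  proof (cases "\<forall>\<phi>::'a \<Rightarrow>\<^sub>L real. (\<forall>x\<in>F. blinfun_apply \<phi> x = 0) \<longrightarrow> \<phi> a = 0")
    case True
    show ?thesis
    proof (rule insert.IH)
      fix \<phi> \<psi> :: "'a \<Rightarrow>\<^sub>L real" show "L (\<phi> + \<psi>) = L \<phi> + L \<psi>" by (rule insert.prems(1))
    next
      fix c and \<phi> :: "'a \<Rightarrow>\<^sub>L real" show "L (c *\<^sub>R \<phi>) = c * L \<phi>" by (rule insert.prems(2))
    next
      fix \<phi> :: "'a \<Rightarrow>\<^sub>L real" assume "\<forall>x\<in>F. blinfun_apply \<phi> x = 0"
      hence "\<forall>x\<in>insert a F. blinfun_apply \<phi> x = 0" using True by simp
      thus "L \<phi> = 0" by (rule insert.prems(3))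
    qed
  next
    case False
    then obtain \<psi>0 :: "'a \<Rightarrow>\<^sub>L real" where p0: "\<forall>x\<in>F. \<psi>0 x = 0" "\<psi>0 a \<noteq> 0" by blast
    define \<psi> where "\<psi> = (1 / \<psi>0 a) *\<^sub>R \<psi>0"
    have p: "\<forall>x\<in>F. \<psi> x = 0" "\<psi> a = 1" using p0 unfolding \<psi>_def by (auto simp: blinfun.scaleR_left)
    define L' where "L' \<phi> = L \<phi> - blinfun_apply \<phi> a * L \<psi>" for \<phi> :: "'a \<Rightarrow>\<^sub>L real"
    have "\<exists>x. \<forall>\<phi>::'a \<Rightarrow>\<^sub>L real. L' \<phi> = \<phi> x"
    proof (rule insert.IH)
      fix \<phi> \<phi>' :: "'a \<Rightarrow>\<^sub>L real" show "L' (\<phi> + \<phi>') = L' \<phi> + L' \<phi>'" unfolding L'_def using insert.prems(1)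
        by (simp add: algebra_simps blinfun.add_left blinfun.scaleR_left)
    next
      fix c and \<phi> :: "'a \<Rightarrow>\<^sub>L real" show "L' (c *\<^sub>R \<phi>) = c * L' \<phi>" unfolding L'_def using insert.prems(2)
        by (simp add: algebra_simps blinfun.add_left blinfun.scaleR_left)
    next
      fix \<phi> :: "'a \<Rightarrow>\<^sub>L real" assume ph: "\<forall>x\<in>F. \<phi> x = 0"
      define \<phi>' where "\<phi>' = \<phi> - (\<phi> a) *\<^sub>R \<psi>"
      have "\<forall>x\<in>insert a F. \<phi>' x = 0" unfolding \<phi>'_def using ph p
        by (auto simp: blinfun.diff_left blinfun.scaleR_left)
      hence "L \<phi>' = 0" by (rule insert.prems(3))
      moreover have "L \<phi>' = L \<phi> - \<phi> a * L \<psi>"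
      proof -
        have "\<phi> = \<phi>' + (\<phi> a) *\<^sub>R \<psi>" unfolding \<phi>'_def by simp
        hence "L \<phi> = L (\<phi>' + (\<phi> a) *\<^sub>R \<psi>)" by simp
        also have "\<dots> = L \<phi>' + \<phi> a * L \<psi>" using insert.prems(1,2) by simp
        finally show ?thesis by simp
      qed
      ultimately show "L' \<phi> = 0" unfolding L'_def by simp
    qed
    then obtain x where x: "\<And>\<phi>::'a \<Rightarrow>\<^sub>L real. L' \<phi> = \<phi> x" by blast
    show ?thesis
    proof (intro exI allI)
      fix \<phi> :: "'a \<Rightarrow>\<^sub>L real"
      have "L \<phi> = \<phi> x + \<phi> a * L \<psi>" using x[of \<phi>] unfolding L'_def by simp
      thus "L \<phi> = \<phi> (x + L \<psi> *\<^sub>R a)" by (simp add: blinfun.add_right blinfun.scaleR_right)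
    qed
  qed
qed

lemma weak_star_eval:
  fixes L :: "('a::real_normed_vector \<Rightarrow>\<^sub>L real) \<Rightarrow> real"
  assumes add: "\<And>(\<phi>::'a \<Rightarrow>\<^sub>L real) \<psi>. L (\<phi> + \<psi>) = L \<phi> + L \<psi>"
    and scl: "\<And>c (\<phi>::'a \<Rightarrow>\<^sub>L real). L (c *\<^sub>R \<phi>) = c * L \<phi>"
    and cont: "continuous_map (pullback_topology UNIV blinfun_apply (powertop_real UNIV)) euclideanreal L"
  shows "\<exists>x. \<forall>\<phi>::'a \<Rightarrow>\<^sub>L real. L \<phi> = \<phi> x"
proof -
  have "\<forall>U. open U \<longrightarrow> openin (pullback_topology UNIV blinfun_apply (powertop_real UNIV)) {x. L x \<in> U}"
    using cont unfolding continuous_map_def by (simp add: topspace_pullback_topology)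
  hence "openin (pullback_topology UNIV blinfun_apply (powertop_real UNIV)) {x. L x \<in> {-1<..<1}}"
    using open_greaterThanLessThan by blast
  hence "openin (pullback_topology UNIV blinfun_apply (powertop_real UNIV)) (L -` {-1<..<1})"
    by (simp add: vimage_def)
  then obtain U where U: "openin (powertop_real UNIV) U" "L -` {-1<..<1} = blinfun_apply -` U"
    unfolding openin_pullback_topology by auto
  have L0: "L 0 = 0" using scl[of 0 0] by simp
  have "(0::'a \<Rightarrow>\<^sub>L real) \<in> L -` {-1<..<1}" using L0 by simp
  hence "blinfun_apply 0 \<in> U" using U(2) by blast
  moreover have "blinfun_apply (0::'a \<Rightarrow>\<^sub>L real) = (\<lambda>_. 0)" by (rule ext) simp
  ultimately have z0: "(\<lambda>_. 0) \<in> U" by simp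
  have "\<exists>V. finite {i \<in> UNIV. V i \<noteq> topspace euclideanreal} \<and> (\<forall>i\<in>UNIV. openin euclideanreal (V i))
     \<and> (\<lambda>_. 0) \<in> Pi\<^sub>E UNIV V \<and> Pi\<^sub>E UNIV V \<subseteq> U"
    using U(1) z0 unfolding openin_product_topology_alt by blast
  then obtain V where V: "finite {i. V i \<noteq> UNIV}" "(\<lambda>_. 0) \<in> Pi\<^sub>E UNIV V" "Pi\<^sub>E UNIV V \<subseteq> U"
    by auto
  show ?thesis
  proof (rule fin_eval[OF V(1) add scl])
    fix \<phi> :: "'a \<Rightarrow>\<^sub>L real" assume ph: "\<forall>x\<in>{i. V i \<noteq> UNIV}. \<phi> x = 0"
    have in0: "0 \<in> V i" for i using V(2) by auto
    have small: "\<bar>t * L \<phi>\<bar> < 1" for t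
    proof -
      have "blinfun_apply (t *\<^sub>R \<phi>) i \<in> V i" for i
      proof (cases "V i = UNIV")
        case True thus ?thesis by simp
      next
        case False hence "\<phi> i = 0" using ph by simp
        thus ?thesis using in0[of i] by (simp add: blinfun.scaleR_left)
      qed
      hence "blinfun_apply (t *\<^sub>R \<phi>) \<in> Pi\<^sub>E UNIV V"
        by (auto simp: PiE_def Pi_def extensional_def)
      hence "t *\<^sub>R \<phi> \<in> L -` {-1<..<1}" using U(2) V(3) by auto
      thus ?thesis using scl by (simp add: abs_less_iff)
    qed
    show "L \<phi> = 0"
    proof (rule ccontr)
      assume ne: "L \<phi> \<noteq> 0"
      have "\<bar>(2 / \<bar>L \<phi>\<bar>) * L \<phi>\<bar> = 2" using ne by (simp add: abs_mult)
      with small[of "2 / \<bar>L \<phi>\<bar>"] show False by simp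
    qed
  qed
qed

lemma exists_seq_code: "\<exists>sc :: (nat \<Rightarrow> real) \<Rightarrow> real. inj sc"
proof -
  obtain b :: "nat set \<Rightarrow> real" where b: "bij b"
    using nat_sets_eqpoll_reals unfolding eqpoll_def by blast
  define ib where "ib = inv b"
  have ib: "inj ib" unfolding ib_def using b by (simp add: bij_imp_bij_inv bij_is_inj)
  define sc where "sc s = b {u. \<exists>n k. u = prod_encode (n,k) \<and> k \<in> ib (s n)}" for s :: "nat \<Rightarrow> real"
  have "inj sc"
  proof (rule injI)
    fix s s' assume "sc s = sc s'"
    hence E: "{u. \<exists>n k. u = prod_encode (n,k) \<and> k \<in> ib (s n)} = {u. \<exists>n k. u = prod_encode (n,k) \<and> k \<in> ib (s' n)}"
      using injD[OF bij_is_inj[OF b]] unfolding sc_def by blast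
    have "ib (s n) = ib (s' n)" for n
    proof -
      have "ib (s n) = {k. prod_encode (n,k) \<in> {u. \<exists>n k. u = prod_encode (n,k) \<and> k \<in> ib (s n)}}"
        by (auto simp: prod_encode_eq)
      also have "\<dots> = ib (s' n)" unfolding E
        by (auto simp: prod_encode_eq)
      finally show ?thesis .
    qed
    thus "s = s'" using injD[OF ib] by blast
  qed
  thus ?thesis by blast
qed

lemma exists_pair_code: "\<exists>pc :: real \<times> real \<Rightarrow> real. inj pc"
proof -
  obtain sc :: "(nat \<Rightarrow> real) \<Rightarrow> real" where sc: "inj sc" using exists_seq_code by blast
  define pc where "pc p = sc (\<lambda>n. if n = 0 then fst p else snd p)" for p
  have "inj pc"
  proof (rule injI)
    fix p q assume "pc p = pc q"
    hence "(\<lambda>n::nat. if n = 0 then fst p else snd p) = (\<lambda>n. if n = 0 then fst q else snd q)"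
      unfolding pc_def using sc by (auto dest: injD)
    from fun_cong[OF this, of 0] fun_cong[OF this, of 1] show "p = q" by (simp add: prod_eq_iff)
  qed
  thus ?thesis by blast
qed

lemma space_code:
  fixes D :: "'a::{first_countable_topology, t2_space} set"
  assumes "closure D = UNIV" "inj_on (j :: 'a \<Rightarrow> real) D"
  shows "\<exists>xc :: 'a \<Rightarrow> real. inj xc"
proof -
  obtain sc :: "(nat \<Rightarrow> real) \<Rightarrow> real" where sc: "inj sc" using exists_seq_code by blast
  have "\<exists>s. (\<forall>n. s n \<in> D) \<and> s \<longlonglongrightarrow> x" for x
    using assms(1) closure_sequential by blast
  then obtain s where s: "\<And>x n. s x n \<in> D" "\<And>x. s x \<longlonglongrightarrow> x" by metis
  define xc where "xc x = sc (\<lambda>n. j (s x n))" for x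
  have "inj xc"
  proof (rule injI)
    fix x y assume "xc x = xc y"
    hence "(\<lambda>n. j (s x n)) = (\<lambda>n. j (s y n))" unfolding xc_def using sc by (auto dest: injD)
    hence "s x n = s y n" for n using inj_onD[OF assms(2) _ s(1) s(1)] fun_cong by metis
    hence "s x = s y" by auto
    hence "s y \<longlonglongrightarrow> x" using s(2)[of x] by simp
    thus "x = y" using LIMSEQ_unique s(2)[of y] by blast
  qed
  thus ?thesis by blast
qed

lemma dual_code:
  fixes ev :: "'f \<Rightarrow> 'a \<Rightarrow> real" and xg :: "'g \<Rightarrow> 'a" and xc :: "'a \<Rightarrow> real"
  assumes inj: "inj (\<lambda>\<phi>. \<lambda>\<gamma>. ev \<phi> (xg \<gamma>))"
    and cnt: "\<And>\<phi>. countable {\<gamma>. ev \<phi> (xg \<gamma>) \<noteq> 0}"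
    and xc: "inj xc"
  shows "\<exists>dc :: 'f \<Rightarrow> real. inj dc"
proof -
  obtain sc :: "(nat \<Rightarrow> real) \<Rightarrow> real" where sc: "inj sc" using exists_seq_code by blast
  obtain pc :: "real \<times> real \<Rightarrow> real" where pc: "inj pc" using exists_pair_code by blast
  define P where "P \<phi> = (\<lambda>\<gamma>. (xg \<gamma>, ev \<phi> (xg \<gamma>))) ` {\<gamma>. ev \<phi> (xg \<gamma>) \<noteq> 0}" for \<phi>
  define Q where "Q \<phi> = insert (undefined, 0) (P \<phi>)" for \<phi>
  have Qc: "countable (Q \<phi>)" "Q \<phi> \<noteq> {}" for \<phi> unfolding Q_def P_def using cnt by auto
  have PQ: "P \<phi> = Q \<phi> - {(undefined, 0)}" for \<phi> unfolding Q_def P_def by auto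
  define dc where "dc \<phi> = sc (\<lambda>n. pc (case from_nat_into (Q \<phi>) n of (x, r) \<Rightarrow> (xc x, r)))" for \<phi>
  have "inj dc"
  proof (rule injI)
    fix \<phi> \<psi> assume "dc \<phi> = dc \<psi>"
    hence "(\<lambda>n. pc (case from_nat_into (Q \<phi>) n of (x, r) \<Rightarrow> (xc x, r))) =
           (\<lambda>n. pc (case from_nat_into (Q \<psi>) n of (x, r) \<Rightarrow> (xc x, r)))"
      unfolding dc_def using sc by (auto dest: injD)
    hence "from_nat_into (Q \<phi>) n = from_nat_into (Q \<psi>) n" for n
      by (auto dest!: fun_cong[of _ _ n] injD[OF pc] injD[OF xc] split: prod.splits)
    hence "range (from_nat_into (Q \<phi>)) = range (from_nat_into (Q \<psi>))" by auto
    hence "Q \<phi> = Q \<psi>" using Qc by simp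
    hence PP: "P \<phi> = P \<psi>" using PQ by simp
    have "ev \<phi> (xg \<gamma>) = ev \<psi> (xg \<gamma>)" for \<gamma>
    proof (cases "ev \<phi> (xg \<gamma>) = 0")
      case True
      show ?thesis
      proof (rule ccontr)
        assume ne: "ev \<phi> (xg \<gamma>) \<noteq> ev \<psi> (xg \<gamma>)"
        hence "(xg \<gamma>, ev \<psi> (xg \<gamma>)) \<in> P \<psi>" using True unfolding P_def by auto
        hence "(xg \<gamma>, ev \<psi> (xg \<gamma>)) \<in> P \<phi>" using PP by simp
        then obtain \<delta> where "xg \<delta> = xg \<gamma>" "ev \<phi> (xg \<delta>) = ev \<psi> (xg \<gamma>)" unfolding P_def by auto
        thus False using ne by simp
      qed
    next
      case False
      hence "(xg \<gamma>, ev \<phi> (xg \<gamma>)) \<in> P \<phi>" unfolding P_def by auto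
      hence "(xg \<gamma>, ev \<phi> (xg \<gamma>)) \<in> P \<psi>" using PP by simp
      then obtain \<delta> where "xg \<delta> = xg \<gamma>" "ev \<psi> (xg \<delta>) = ev \<phi> (xg \<gamma>)" unfolding P_def by auto
      thus ?thesis by simp
    qed
    thus "\<phi> = \<psi>" using inj by (auto dest: injD)
  qed
  thus ?thesis by blast
qed

unbundle cardinal_syntax

lemma countable_under_W:
  assumes "a \<in> Field (cardSuc natLeq)"
  shows "countable {b. (b, a) \<in> cardSuc natLeq}"
proof -
  let ?W = "cardSuc natLeq"
  have WC: "Card_order ?W" by (simp add: cardSuc_Card_order natLeq_Card_order)
  have "|underS ?W a| <o ?W" using card_of_underS[OF WC assms] .
  hence "|underS ?W a| \<le>o natLeq"
    by (rule cardSuc_ordLeq_ordLess[OF natLeq_Card_order card_of_Card_order, THEN iffD1])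
  hence c: "countable (underS ?W a)" using countable_card_le_natLeq by blast
  have sub: "{b. (b, a) \<in> ?W} \<subseteq> insert a (underS ?W a)" unfolding underS_def by auto
  show ?thesis by (rule countable_subset[OF sub countable_insert[OF c]])
qed

lemma W_total:
  assumes "a \<in> Field (cardSuc natLeq)" "b \<in> Field (cardSuc natLeq)"
  shows "(a, b) \<in> cardSuc natLeq \<or> (b, a) \<in> cardSuc natLeq"
proof -
  have "wo_rel (cardSuc natLeq)" unfolding wo_rel_def by (rule cardSuc_Well_order[OF natLeq_Card_order])
  from wo_rel.TOTALS[OF this] show ?thesis using assms by blast
qed

lemma line_not_dense:
  fixes x :: "'a::real_normed_vector"
  assumes nc: "\<And>D'::'a set. closure D' = UNIV \<Longrightarrow> \<not> countable D'"
  shows "closure (range (\<lambda>c. c *\<^sub>R x)) \<noteq> UNIV"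
proof
  assume E: "closure (range (\<lambda>c. c *\<^sub>R x)) = UNIV"
  define D' where "D' = (\<lambda>c. c *\<^sub>R x) ` \<rat>"
  have cD: "countable D'" unfolding D'_def by (simp add: countable_rat)
  have "(\<lambda>c. c *\<^sub>R x) ` closure \<rat> \<subseteq> closure D'"
  proof (rule image_closure_subset)
    show "continuous_on (closure \<rat>) (\<lambda>c. c *\<^sub>R x)" by (intro continuous_intros)
    show "closed (closure D')" by simp
    show "(\<lambda>c. c *\<^sub>R x) ` \<rat> \<subseteq> closure D'" unfolding D'_def by (rule closure_subset)
  qed
  hence "range (\<lambda>c. c *\<^sub>R x) \<subseteq> closure D'" by (simp add: Rats_closure_real)
  hence "closure (range (\<lambda>c. c *\<^sub>R x)) \<subseteq> closure D'" by (simp add: closure_minimal)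
  hence "closure D' = UNIV" using E by auto
  thus False using nc cD by blast
qed

lemma zero_exists:
  fixes x :: "'a::real_normed_vector"
  assumes nc: "\<And>D'::'a set. closure D' = UNIV \<Longrightarrow> \<not> countable D'"
  shows "\<exists>g::'a \<Rightarrow>\<^sub>L real. g \<noteq> 0 \<and> blinfun_apply g x = 0"
proof -
  define Y where "Y = closure (range (\<lambda>c. c *\<^sub>R x))"
  have "subspace (range (\<lambda>c. c *\<^sub>R x))"
    unfolding subspace_def
  proof (intro conjI ballI allI)
    show "0 \<in> range (\<lambda>c. c *\<^sub>R x)" by (rule range_eqI[of _ _ 0]) simp
  next
    fix u v assume "u \<in> range (\<lambda>c. c *\<^sub>R x)" "v \<in> range (\<lambda>c. c *\<^sub>R x)"
    then obtain a b where "u = a *\<^sub>R x" "v = b *\<^sub>R x" by blast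
    thus "u + v \<in> range (\<lambda>c. c *\<^sub>R x)" by (intro range_eqI[of _ _ "a + b"]) (simp add: scaleR_left_distrib)
  next
    fix c u assume "u \<in> range (\<lambda>c. c *\<^sub>R x)"
    then obtain a where "u = a *\<^sub>R x" by blast
    thus "c *\<^sub>R u \<in> range (\<lambda>c. c *\<^sub>R x)" by (intro range_eqI[of _ _ "c * a"]) simp
  qed
  hence Ys: "subspace Y" unfolding Y_def by (rule subspace_closure_real)
  have "Y \<noteq> UNIV" unfolding Y_def using line_not_dense[OF nc] by blast
  then obtain z where z: "z \<notin> Y" by blast
  obtain f :: "'a \<Rightarrow>\<^sub>L real" where f: "\<forall>y\<in>Y. f y = 0" "f z = 1"
    using separate_subspace[OF Ys _ z] unfolding Y_def by (meson closed_closure)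
  have "x \<in> Y" unfolding Y_def by (rule closure_subset[THEN subsetD], rule range_eqI[of _ _ 1]) simp
  hence "f x = 0" using f by blast
  moreover have "f \<noteq> 0" using f(2) by auto
  ultimately show ?thesis by blast
qed

theorem corollary3p4:
  fixes X :: "'a::banach itself" and \<Gamma> :: "'g itself"
  assumes "CH"
    and "WLD_via X \<Gamma>"
    and "dens_is X (cardSuc natLeq)"
  shows "\<exists>S :: 'a set. overcomplete S"
proof -
  define W where "W = cardSuc natLeq"
  have WC: "Card_order W" unfolding W_def by (simp add: cardSuc_Card_order natLeq_Card_order)
  have natW: "natLeq <o W" unfolding W_def by (simp add: cardSuc_greater natLeq_Card_order)
  have chW: "|UNIV::real set| =o W" using assms(1) unfolding CH_def W_def .
  obtain D :: "'a set" where D: "closure D = UNIV" "|D| =o W"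
    and densall: "\<And>D'. closure D' = (UNIV::'a set) \<Longrightarrow> W \<le>o |D'|"
    using assms(3) unfolding dens_is_def W_def by blast
  have nc: "\<not> countable D'" if "closure D' = (UNIV::'a set)" for D'
  proof
    assume "countable D'"
    hence "|D'| \<le>o natLeq" using countable_card_le_natLeq by blast
    hence "|D'| <o W" using natW by (rule ordLeq_ordLess_trans)
    hence "W <o W" by (rule ordLeq_ordLess_trans[OF densall[OF that]])
    thus False using ordLess_irreflexive[of W] by simp
  qed
  have "|D| \<le>o |UNIV::real set|"
    using ordIso_iff_ordLeq[THEN iffD1, OF ordIso_transitive[OF D(2) ordIso_symmetric[OF chW]]] by (rule conjunct1)
  then obtain j :: "'a \<Rightarrow> real" where j: "inj_on j D"
    using card_of_ordLeq[of D "UNIV::real set", THEN iffD2] by blast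
  obtain xc :: "'a \<Rightarrow> real" where xc: "inj xc" using space_code[OF D(1) j] by blast
  obtain T :: "('a \<Rightarrow>\<^sub>L real) \<Rightarrow> ('g \<Rightarrow> real)" where
    Tc: "\<And>\<phi>. T \<phi> \<in> ell_inf_c"
    and Ta: "\<And>\<phi> \<psi> \<gamma>. T (\<phi> + \<psi>) \<gamma> = T \<phi> \<gamma> + T \<psi> \<gamma>"
    and Ts: "\<And>c \<phi> \<gamma>. T (c *\<^sub>R \<phi>) \<gamma> = c * T \<phi> \<gamma>"
    and Ti: "inj T"
    and Tcont: "continuous_map weak_star_topology (powertop_real UNIV) T"
    using assms(2) unfolding WLD_via_def by blast
  have "\<forall>\<gamma>. \<exists>x. \<forall>\<phi>. T \<phi> \<gamma> = \<phi> x"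
  proof
    fix \<gamma>
    have "continuous_map weak_star_topology euclideanreal ((\<lambda>f. f \<gamma>) \<circ> T)"
      using continuous_map_compose[OF Tcont continuous_map_product_projection[of \<gamma> UNIV]] by simp
    hence "continuous_map (pullback_topology UNIV blinfun_apply (powertop_real UNIV)) euclideanreal (\<lambda>\<phi>. T \<phi> \<gamma>)"
      unfolding weak_star_topology_def by (simp add: o_def)
    thus "\<exists>x. \<forall>\<phi>. T \<phi> \<gamma> = \<phi> x" using weak_star_eval[of "\<lambda>\<phi>. T \<phi> \<gamma>"] Ta Ts by blast
  qed
  from choice[OF this] obtain xg :: "'g \<Rightarrow> 'a" where xg0: "\<forall>\<gamma>. \<forall>\<phi>. T \<phi> \<gamma> = \<phi> (xg \<gamma>)" by blast
  hence xg: "\<And>\<phi> \<gamma>. T \<phi> \<gamma> = \<phi> (xg \<gamma>)" by blast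
  have Teq: "T \<phi> = (\<lambda>\<gamma>. \<phi> (xg \<gamma>))" for \<phi> using xg by auto
  have inj2: "inj (\<lambda>\<phi>::'a \<Rightarrow>\<^sub>L real. \<lambda>\<gamma>. \<phi> (xg \<gamma>))" using Ti unfolding Teq .
  have cnt2: "countable {\<gamma>. blinfun_apply \<phi> (xg \<gamma>) \<noteq> 0}" for \<phi> :: "'a \<Rightarrow>\<^sub>L real"
    using Tc[of \<phi>] unfolding ell_inf_c_def Teq by simp
  obtain dc :: "('a \<Rightarrow>\<^sub>L real) \<Rightarrow> real" where dc: "inj dc"
    using dual_code[OF inj2 cnt2 xc] by blast
  have "|UNIV::('a \<Rightarrow>\<^sub>L real) set| \<le>o |UNIV::real set|"
    using dc card_of_ordLeq[of "UNIV::('a \<Rightarrow>\<^sub>L real) set" "UNIV::real set", THEN iffD1] by blast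
  hence dualW: "|UNIV::('a \<Rightarrow>\<^sub>L real) set| \<le>o W" using chW by (rule ordLeq_ordIso_trans)
  have "|UNIV::('a \<Rightarrow>\<^sub>L real) set| \<le>o |Field W|"
    using dualW ordIso_symmetric[OF card_of_Field_ordIso[OF WC]] by (rule ordLeq_ordIso_trans)
  then obtain e :: "('a \<Rightarrow>\<^sub>L real) \<Rightarrow> nat set" where e: "inj e" "\<And>\<phi>. e \<phi> \<in> Field W"
    using card_of_ordLeq[of "UNIV::('a \<Rightarrow>\<^sub>L real) set" "Field W", THEN iffD2] by blast
  define Bef where "Bef h = {g. g \<noteq> 0 \<and> (e g, e h) \<in> W}" for h
  have Bef_c: "countable (Bef h)" for h
  proof -
    have "e ` Bef h \<subseteq> {b. (b, e h) \<in> W}" unfolding Bef_def by auto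
    moreover have "countable {b. (b, e h) \<in> W}" using countable_under_W[OF e(2)[unfolded W_def]] unfolding W_def .
    ultimately have "countable (e ` Bef h)" by (rule countable_subset)
    thus ?thesis by (rule countable_image_inj_on[OF _ inj_on_subset[OF e(1) subset_UNIV]])
  qed
  define xh where "xh h = (SOME x. \<forall>g\<in>Bef h. g x \<noteq> 0)" for h
  have xh: "\<And>g. g \<in> Bef h \<Longrightarrow> g (xh h) \<noteq> 0" for h
  proof -
    have "\<exists>x. \<forall>g\<in>Bef h. g x \<noteq> 0" using avoid_kernels[OF Bef_c] unfolding Bef_def by blast
    from someI_ex[OF this] show "\<And>g. g \<in> Bef h \<Longrightarrow> g (xh h) \<noteq> 0" unfolding xh_def by blast
  qed
  have key: "h \<in> Bef g" if "g \<noteq> 0" "h \<noteq> 0" "blinfun_apply g (xh h) = 0" for g h :: "'a \<Rightarrow>\<^sub>L real"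
  proof -
    have "(e g, e h) \<notin> W" using xh[of g h] that unfolding Bef_def by auto
    moreover have "(e g, e g) \<in> W"
      using W_total[of "e g" "e g"] e(2) unfolding W_def by blast
    ultimately have "(e h, e g) \<in> W" using W_total[of "e g" "e h"] e(2) unfolding W_def by blast
    thus ?thesis unfolding Bef_def using that by auto
  qed
  define N where "N = (UNIV::('a \<Rightarrow>\<^sub>L real) set) - {0}"
  define S where "S = xh ` N"
  have S_unc: "\<not> countable S"
  proof
    assume cS: "countable S"
    have "\<forall>s. \<exists>g::'a \<Rightarrow>\<^sub>L real. g \<noteq> 0 \<and> blinfun_apply g s = 0" using zero_exists[OF nc] by blast
    from choice[OF this] obtain gs :: "'a \<Rightarrow> ('a \<Rightarrow>\<^sub>L real)" where gs0: "\<forall>s. gs s \<noteq> 0 \<and> blinfun_apply (gs s) s = 0" by blast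
    hence gs: "\<And>s. gs s \<noteq> 0" "\<And>s. blinfun_apply (gs s) s = 0" by auto
    have "N \<subseteq> (\<Union>s\<in>S. Bef (gs s))"
    proof
      fix h assume h: "h \<in> N"
      hence "h \<in> Bef (gs (xh h))" using key[OF gs(1) _ gs(2)] unfolding N_def by blast
      thus "h \<in> (\<Union>s\<in>S. Bef (gs s))" using h unfolding S_def by blast
    qed
    moreover have "countable (\<Union>s\<in>S. Bef (gs s))" by (intro countable_UN cS Bef_c)
    ultimately have "countable N" by (rule countable_subset)
    then obtain x where x: "\<forall>g\<in>N. g x \<noteq> 0" using avoid_kernels[of N] unfolding N_def by blast
    obtain g :: "'a \<Rightarrow>\<^sub>L real" where "g \<noteq> 0" "blinfun_apply g x = 0" using zero_exists[OF nc] by blast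
    thus False using x unfolding N_def by blast
  qed
  have SN: "|S| \<le>o |N|" unfolding S_def by (rule card_of_image)
  have NU: "|N| \<le>o |UNIV::('a \<Rightarrow>\<^sub>L real) set|" by (rule card_of_mono1) simp
  have SW1: "|S| \<le>o W" by (rule ordLeq_transitive[OF ordLeq_transitive[OF SN NU] dualW])
  have "\<not> |S| \<le>o natLeq" using S_unc countable_card_le_natLeq by blast
  hence "natLeq <o |S|"
    by (rule not_ordLeq_iff_ordLess[OF natLeq_Well_order card_of_Well_order, THEN iffD1])
  hence SW2: "W \<le>o |S|" unfolding W_def
    by (rule cardSuc_ordLess_ordLeq[OF natLeq_Card_order card_of_Card_order, THEN iffD1])
  have SW: "|S| =o W" using SW1 SW2 by (simp add: ordIso_iff_ordLeq)
  have "overcomplete S"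
    unfolding overcomplete_def dens_is_def
  proof (intro conjI allI impI)
    show "\<exists>D::'a set. closure D = UNIV \<and> |D| =o |S|"
      using D(1) ordIso_transitive[OF D(2) ordIso_symmetric[OF SW]] by blast
  next
    fix D' :: "'a set" assume "closure D' = UNIV"
    thus "|S| \<le>o |D'|" using ordIso_ordLeq_trans[OF SW densall] by blast
  next
    fix \<Lambda> assume \<Lambda>: "\<Lambda> \<subseteq> S" "|\<Lambda>| =o |S|"
    show "closure (span \<Lambda>) = UNIV"
    proof (rule ccontr)
      assume "closure (span \<Lambda>) \<noteq> UNIV"
      then obtain z where z: "z \<notin> closure (span \<Lambda>)" by blast
      have Ys: "subspace (closure (span \<Lambda>))" by (rule subspace_closure_real[OF subspace_span])
      obtain f :: "'a \<Rightarrow>\<^sub>L real" where f: "\<forall>y\<in>closure (span \<Lambda>). f y = 0" "f z = 1"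
        using separate_subspace[OF Ys _ z] by auto
      have f0: "f \<noteq> 0" using f(2) by auto
      have "\<Lambda> \<subseteq> xh ` Bef f"
      proof
        fix s assume s: "s \<in> \<Lambda>"
        then obtain h where h: "h \<in> N" "s = xh h" using \<Lambda>(1) unfolding S_def by blast
        have "s \<in> closure (span \<Lambda>)" using s closure_subset span_superset by blast
        hence "f (xh h) = 0" using f(1) h(2) by blast
        hence "h \<in> Bef f" using key[OF f0 _] h(1) unfolding N_def by blast
        thus "s \<in> xh ` Bef f" using h(2) by blast
      qed
      hence "countable \<Lambda>" by (rule countable_subset[OF _ countable_image[OF Bef_c]])
      hence "|\<Lambda>| \<le>o natLeq" using countable_card_le_natLeq by blast
      hence "|S| \<le>o natLeq" using ordIso_ordLeq_trans[OF ordIso_symmetric[OF \<Lambda>(2)]] by blast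
      thus False using S_unc countable_card_le_natLeq by blast
    qed
  qed
  thus ?thesis by blast
qed

end
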